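(* Let $(\Omega,\mathcal{F},P_0)$ be a complete probability space, $\epsilon\in(0,1)$, $\mathcal{C}\subseteq\mathcal{F}$ a sub-$\sigma$-algebra, and $\rho$ a sublinear operator on $L^{2+\epsilon}_{\mathcal{F}}(\Omega,P_0)$ with representation set $\mathcal{P}$, satisfying the standing assumptions below. If $\xi\in L^{4+2\epsilon}_{\mathcal{F}}(\Omega,P_0)$ and $\rho$ is stable, then there exists a constant $M$ such that for any $P\in\mathcal{P}$ $$\inf_{\eta\in L^{2+\epsilon}_{\mathcal{C}}(P_0)}E_P[(\xi-\eta)^2]=\inf_{\eta\in L^{2+\epsilon,M}_{\mathcal{C}}(P_0)}E_P[(\xi-\eta)^2],$$ where $L^{2+\epsilon,M}_{\mathcal{C}}(P_0)=\{\eta\in L^{2+\epsilon}_{\mathcal{C}}(P_0):\|\eta\|_{L^{2+\epsilon}(P_0)}\le M\}$.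
   Context: A sublinear operator is a map $\rho:L^{2+\epsilon}_{\mathcal{F}}(\Omega,P_0)\to\mathbb{R}$ that is monotone, constant preserving, sub-additive and positively homogeneous. Its representation set $\mathcal{P}$ is the family of all linear expectations (identified with probability measures $P$) dominated by $\rho$, so $\rho(\xi)=\max_{P\in\mathcal{P}}E_P[\xi]$. Write $f^P=dP/dP_0$, $\mathcal{D}=\{f^P:P\in\mathcal{P}\}$. Standing assumptions: every $P\in\mathcal{P}$ is equivalent to $P_0$; $\mathcal{D}$ is norm-bounded in $L^{1+\frac{2}{\epsilon}}_{\mathcal{F}}(P_0)$ and $\sigma(L^{1+\frac{2}{\epsilon}}(P_0),L^{1+\frac{\epsilon}{2}}(P_0))$-compact. $\rho$ is stable if for each $P\in\mathcal{P}$ the random variable $f^P/E_{P_0}[f^P\mid\mathcal{C}]$ lies in $\mathcal{D}$. $L^{2+\epsilon}_{\mathcal{C}}(P_0)$ denotes the $\mathcal{C}$-measurable elements of $L^{2+\epsilon}(P_0)$. *)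

theory Defs
  imports "HOL-Probability.Probability"
begin

definition Lp_set :: "'a measure \<Rightarrow> real \<Rightarrow> ('a \<Rightarrow> real) set" where
  "Lp_set M p = {f. f \<in> borel_measurable M \<and> integrable M (\<lambda>x. \<bar>f x\<bar> powr p)}"

definition Lp_norm :: "'a measure \<Rightarrow> real \<Rightarrow> ('a \<Rightarrow> real) \<Rightarrow> real" where
  "Lp_norm M p f = (\<integral>x. \<bar>f x\<bar> powr p \<partial>M) powr (1 / p)"

definition sublinear_operator :: "'a measure \<Rightarrow> real \<Rightarrow> (('a \<Rightarrow> real) \<Rightarrow> real) \<Rightarrow> bool" where
  "sublinear_operator M p \<rho> \<longleftrightarrow>
     (\<forall>\<xi>\<in>Lp_set M p. \<forall>\<eta>\<in>Lp_set M p. (AE x in M. \<xi> x \<le> \<eta> x) \<longrightarrow> \<rho> \<xi> \<le> \<rho> \<eta>) \<and>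
     (\<forall>c::real. \<rho> (\<lambda>_. c) = c) \<and>
     (\<forall>\<xi>\<in>Lp_set M p. \<forall>\<eta>\<in>Lp_set M p. \<rho> (\<lambda>x. \<xi> x + \<eta> x) \<le> \<rho> \<xi> + \<rho> \<eta>) \<and>
     (\<forall>\<xi>\<in>Lp_set M p. \<forall>a::real. a \<ge> 0 \<longrightarrow> \<rho> (\<lambda>x. a * \<xi> x) = a * \<rho> \<xi>)"

definition rep_set :: "'a measure \<Rightarrow> real \<Rightarrow> (('a \<Rightarrow> real) \<Rightarrow> real) \<Rightarrow> 'a measure set" where
  "rep_set M p \<rho> = {Q. prob_space Q \<and> sets Q = sets M \<and>
      (\<forall>\<xi>\<in>Lp_set M p. integrable Q \<xi> \<and> (\<integral>x. \<xi> x \<partial>Q) \<le> \<rho> \<xi>)}"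

definition dens :: "'a measure \<Rightarrow> 'a measure \<Rightarrow> 'a \<Rightarrow> real" where
  "dens M Q = (\<lambda>x. enn2real (RN_deriv M Q x))"

definition weak_Lp_topology :: "'a measure \<Rightarrow> real \<Rightarrow> real \<Rightarrow> ('a \<Rightarrow> real) topology" where
  "weak_Lp_topology M q q' = topology_generated_by
     {{f \<in> Lp_set M q. (\<integral>x. f x * g x \<partial>M) \<in> U} | g U. g \<in> Lp_set M q' \<and> open U}"

definition stable :: "'a measure \<Rightarrow> 'a measure \<Rightarrow> real \<Rightarrow> (('a \<Rightarrow> real) \<Rightarrow> real) \<Rightarrow> bool" where
  "stable M C p \<rho> \<longleftrightarrow> (\<forall>Q\<in>rep_set M p \<rho>. \<exists>Q'\<in>rep_set M p \<rho>.
      AE x in M. dens M Q' x = dens M Q x / real_cond_exp M C (dens M Q) x)"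

end

theory Submission
  imports Defs
begin


lemma pw2:
  fixes x y a b :: real
  assumes "0 \<le> x" "0 \<le> y" "0 < a" "0 < b" "1/a + 1/b = 1"
  shows "x * y \<le> x powr a + y powr b"
proof -
  define m where "m = max (x powr a) (y powr b)"
  have m0: "0 \<le> m" unfolding m_def by (simp add: le_max_iff_disj)
  have "x = (x powr a) powr (1/a)" using assms by (simp add: powr_powr)
  also have "\<dots> \<le> m powr (1/a)" unfolding m_def by (intro powr_mono2) (use assms in auto)
  finally have hx: "x \<le> m powr (1/a)" .
  have "y = (y powr b) powr (1/b)" using assms by (simp add: powr_powr)
  also have "\<dots> \<le> m powr (1/b)" unfolding m_def by (intro powr_mono2) (use assms in auto)
  finally have hy: "y \<le> m powr (1/b)" .
  have "x * y \<le> m powr (1/a) * m powr (1/b)" using hx hy assms by (intro mult_mono) auto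
  also have "\<dots> = m powr (1/a + 1/b)" by (simp add: powr_add)
  also have "\<dots> = m" using assms m0 by simp
  also have "\<dots> \<le> x powr a + y powr b" unfolding m_def by simp
  finally show ?thesis .
qed


lemma pw3:
  fixes x y z a b c :: real
  assumes "0 \<le> x" "0 \<le> y" "0 \<le> z" "0 < a" "0 < b" "0 < c" "1/a + 1/b + 1/c = 1"
  shows "x * y * z \<le> x powr a + y powr b + z powr c"
proof -
  define m where "m = max (x powr a) (max (y powr b) (z powr c))"
  have m0: "0 \<le> m" unfolding m_def by (simp add: le_max_iff_disj)
  have "x = (x powr a) powr (1/a)" using assms by (simp add: powr_powr)
  also have "\<dots> \<le> m powr (1/a)" unfolding m_def by (intro powr_mono2) (use assms in auto)
  finally have hx: "x \<le> m powr (1/a)" .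
  have "y = (y powr b) powr (1/b)" using assms by (simp add: powr_powr)
  also have "\<dots> \<le> m powr (1/b)" unfolding m_def by (intro powr_mono2) (use assms in auto)
  finally have hy: "y \<le> m powr (1/b)" .
  have "z = (z powr c) powr (1/c)" using assms by (simp add: powr_powr)
  also have "\<dots> \<le> m powr (1/c)" unfolding m_def by (intro powr_mono2) (use assms in auto)
  finally have hz: "z \<le> m powr (1/c)" .
  have "x * y * z \<le> m powr (1/a) * m powr (1/b) * m powr (1/c)" using hx hy hz assms
    by (intro mult_mono) auto
  also have "\<dots> = m powr (1/a + 1/b + 1/c)" by (simp add: powr_add)
  also have "\<dots> = m" using assms m0 by simp
  also have "\<dots> \<le> x powr a + y powr b + z powr c" unfolding m_def by simp
  finally show ?thesis .
qed


lemma integrable_by_bound: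
  fixes f g :: "'a \<Rightarrow> real"
  assumes "integrable M g" "f \<in> borel_measurable M" "\<And>x. x \<in> space M \<Longrightarrow> \<bar>f x\<bar> \<le> g x"
  shows "integrable M f"
proof (rule Bochner_Integration.integrable_bound[OF assms(1,2)])
  show "AE x in M. norm (f x) \<le> norm (g x)"
    by (intro AE_I2) (use assms(3) in fastforce)
qed


lemma Lp_mono:
  assumes "finite_measure M" "f \<in> Lp_set M s" "0 < r" "r \<le> s"
  shows "f \<in> Lp_set M r"
proof -
  interpret finite_measure M by fact
  have [measurable]: "f \<in> borel_measurable M" and i: "integrable M (\<lambda>x. \<bar>f x\<bar> powr s)"
    using assms(2) by (auto simp: Lp_set_def)
  have i2: "integrable M (\<lambda>x. 1 + \<bar>f x\<bar> powr s)" by (intro Bochner_Integration.integrable_add integrable_const i)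
  have b: "\<bar>f x\<bar> powr r \<le> 1 + \<bar>f x\<bar> powr s" for x
  proof (cases "\<bar>f x\<bar> \<le> 1")
    case True
    then have "\<bar>f x\<bar> powr r \<le> 1 powr r" using assms(3) by (intro powr_mono2) simp_all
    moreover have "0 \<le> \<bar>f x\<bar> powr s" by simp
    moreover have "1 powr r = (1::real)" by simp
    ultimately show ?thesis by linarith
  next
    case False
    then have "\<bar>f x\<bar> powr r \<le> \<bar>f x\<bar> powr s" using assms(4) by (intro powr_mono) simp_all
    moreover have "0 \<le> \<bar>f x\<bar> powr s" by simp
    ultimately show ?thesis by linarith
  qed
  have "integrable M (\<lambda>x. \<bar>f x\<bar> powr r)"
  proof (rule integrable_by_bound[OF i2])
    show "(\<lambda>x. \<bar>f x\<bar> powr r) \<in> borel_measurable M" by measurable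
    show "\<bar>\<bar>f x\<bar> powr r\<bar> \<le> 1 + \<bar>f x\<bar> powr s" for x using b[of x] by simp
  qed
  then show ?thesis by (simp add: Lp_set_def)
qed

lemma Lp_diff:
  assumes "f \<in> Lp_set M p" "g \<in> Lp_set M p" "0 < p"
  shows "(\<lambda>x. f x - g x) \<in> Lp_set M p"
proof -
  have [measurable]: "f \<in> borel_measurable M" "g \<in> borel_measurable M"
    and i: "integrable M (\<lambda>x. \<bar>f x\<bar> powr p)" "integrable M (\<lambda>x. \<bar>g x\<bar> powr p)"
    using assms by (auto simp: Lp_set_def)
  have i2: "integrable M (\<lambda>x. 2 powr p * (\<bar>f x\<bar> powr p + \<bar>g x\<bar> powr p))"
    by (intro integrable_mult_right Bochner_Integration.integrable_add i)
  have b: "\<bar>f x - g x\<bar> powr p \<le> 2 powr p * (\<bar>f x\<bar> powr p + \<bar>g x\<bar> powr p)" for x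
  proof -
    have "\<bar>f x - g x\<bar> \<le> 2 * max \<bar>f x\<bar> \<bar>g x\<bar>" by linarith
    then have "\<bar>f x - g x\<bar> powr p \<le> (2 * max \<bar>f x\<bar> \<bar>g x\<bar>) powr p"
      using assms(3) by (intro powr_mono2) simp_all
    also have "\<dots> = 2 powr p * (max \<bar>f x\<bar> \<bar>g x\<bar>) powr p" by (simp add: powr_mult)
    also have "(max \<bar>f x\<bar> \<bar>g x\<bar>) powr p \<le> \<bar>f x\<bar> powr p + \<bar>g x\<bar> powr p"
    proof (cases "\<bar>f x\<bar> \<le> \<bar>g x\<bar>")
      case True
      then have "max \<bar>f x\<bar> \<bar>g x\<bar> powr p = \<bar>g x\<bar> powr p" by simp
      moreover have "0 \<le> \<bar>f x\<bar> powr p" by simp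
      ultimately show ?thesis by linarith
    next
      case False
      then have "max \<bar>f x\<bar> \<bar>g x\<bar> powr p = \<bar>f x\<bar> powr p" by simp
      moreover have "0 \<le> \<bar>g x\<bar> powr p" by simp
      ultimately show ?thesis by linarith
    qed
    finally show ?thesis by (simp add: mult_left_mono)
  qed
  have "integrable M (\<lambda>x. \<bar>f x - g x\<bar> powr p)"
  proof (rule integrable_by_bound[OF i2])
    show "(\<lambda>x. \<bar>f x - g x\<bar> powr p) \<in> borel_measurable M" by measurable
    show "\<bar>\<bar>f x - g x\<bar> powr p\<bar> \<le> 2 powr p * (\<bar>f x\<bar> powr p + \<bar>g x\<bar> powr p)" for x using b[of x] by simp
  qed
  then show ?thesis by (simp add: Lp_set_def)
qed


lemma convex_abs_powr:
  assumes "1 \<le> (p::real)"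
  shows "convex_on UNIV (\<lambda>t::real. \<bar>t\<bar> powr p)"
proof (rule convex_onI)
  fix u x y :: real assume u: "0 < u" "u < 1"
  have c0: "((1-u)*a + u*b) powr p \<le> (1-u) * a powr p + u * b powr p" if ab: "0 \<le> a" "0 \<le> b" for a b :: real
  proof (cases "a = 0 \<or> b = 0")
    case True
    have "t powr p \<le> t" if "0 \<le> t" "t \<le> 1" for t :: real
    proof (cases "t = 0")
      case False
      then have "t powr p \<le> t powr 1" using that assms by (intro powr_mono') auto
      then show ?thesis using that by simp
    qed simp
    then have "u powr p \<le> u" "(1-u) powr p \<le> 1-u" using u by auto
    then show ?thesis
    proof (cases "a = 0")
      case True
      have "((1-u)*a + u*b) powr p = u powr p * b powr p" using True ab u by (simp add: powr_mult)
      also have "\<dots> \<le> u * b powr p" using \<open>u powr p \<le> u\<close> by (rule mult_right_mono) simp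
      finally show ?thesis using True by simp
    next
      case False
      then have b0: "b = 0" using \<open>a = 0 \<or> b = 0\<close> by simp
      have "((1-u)*a + u*b) powr p = (1-u) powr p * a powr p" using b0 ab u by (simp add: powr_mult)
      also have "\<dots> \<le> (1-u) * a powr p" using \<open>(1-u) powr p \<le> 1-u\<close> by (rule mult_right_mono) simp
      finally show ?thesis using b0 by simp
    qed
  next
    case False
    then have "a \<in> {0<..}" "b \<in> {0<..}" using ab by auto
    from convex_onD[OF powr_convex[OF assms], of u a b, OF _ _ this] u show ?thesis by simp
  qed
  have "\<bar>(1-u)*x + u*y\<bar> \<le> (1-u)*\<bar>x\<bar> + u*\<bar>y\<bar>" using u
    by (metis abs_mult abs_of_pos abs_triangle_ineq diff_gt_0_iff_gt)
  then have "\<bar>(1-u)*x + u*y\<bar> powr p \<le> ((1-u)*\<bar>x\<bar> + u*\<bar>y\<bar>) powr p"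
    by (intro powr_mono2) (use assms in auto)
  also have "\<dots> \<le> (1-u) * \<bar>x\<bar> powr p + u * \<bar>y\<bar> powr p" by (rule c0) auto
  finally show "\<bar>(1 - u) *\<^sub>R x + u *\<^sub>R y\<bar> powr p \<le> (1 - u) * \<bar>x\<bar> powr p + u * \<bar>y\<bar> powr p" by simp
qed simp





lemma int3_gen:
  fixes g u v :: "'a \<Rightarrow> real"
  assumes "g \<in> Lp_set M a" "u \<in> Lp_set M b" "v \<in> Lp_set M c"
    "0 < a" "0 < b" "0 < c" "1/a + 1/b + 1/c = 1"
  shows "integrable M (\<lambda>x. g x * (u x * v x))"
proof -
  have [measurable]: "g \<in> borel_measurable M" "u \<in> borel_measurable M" "v \<in> borel_measurable M"
    and i: "integrable M (\<lambda>x. \<bar>g x\<bar> powr a)" "integrable M (\<lambda>x. \<bar>u x\<bar> powr b)"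
      "integrable M (\<lambda>x. \<bar>v x\<bar> powr c)"
    using assms(1-3) by (auto simp: Lp_set_def)
  have i2: "integrable M (\<lambda>x. \<bar>g x\<bar> powr a + \<bar>u x\<bar> powr b + \<bar>v x\<bar> powr c)"
    by (intro Bochner_Integration.integrable_add i)
  show ?thesis
  proof (rule integrable_by_bound[OF i2])
    show "(\<lambda>x. g x * (u x * v x)) \<in> borel_measurable M" by measurable
    fix x
    have "\<bar>g x\<bar> * \<bar>u x\<bar> * \<bar>v x\<bar> \<le> \<bar>g x\<bar> powr a + \<bar>u x\<bar> powr b + \<bar>v x\<bar> powr c"
      by (rule pw3) (use assms(4-7) in auto)
    then show "\<bar>g x * (u x * v x)\<bar> \<le> \<bar>g x\<bar> powr a + \<bar>u x\<bar> powr b + \<bar>v x\<bar> powr c"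
      by (simp add: abs_mult mult.assoc)
  qed
qed

lemma int2_gen:
  fixes g u :: "'a \<Rightarrow> real"
  assumes "g \<in> Lp_set M a" "u \<in> Lp_set M b" "0 < a" "0 < b" "1/a + 1/b = 1"
  shows "integrable M (\<lambda>x. g x * u x)"
proof -
  have [measurable]: "g \<in> borel_measurable M" "u \<in> borel_measurable M"
    and i: "integrable M (\<lambda>x. \<bar>g x\<bar> powr a)" "integrable M (\<lambda>x. \<bar>u x\<bar> powr b)"
    using assms(1-2) by (auto simp: Lp_set_def)
  have i2: "integrable M (\<lambda>x. \<bar>g x\<bar> powr a + \<bar>u x\<bar> powr b)"
    by (intro Bochner_Integration.integrable_add i)
  show ?thesis
  proof (rule integrable_by_bound[OF i2])
    show "(\<lambda>x. g x * u x) \<in> borel_measurable M" by measurable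
    fix x
    have "\<bar>g x\<bar> * \<bar>u x\<bar> \<le> \<bar>g x\<bar> powr a + \<bar>u x\<bar> powr b"
      by (rule pw2) (use assms(3-5) in auto)
    then show "\<bar>g x * u x\<bar> \<le> \<bar>g x\<bar> powr a + \<bar>u x\<bar> powr b"
      by (simp add: abs_mult)
  qed
qed

lemma dens_nonneg: "0 \<le> dens M Q x"
  by (simp add: dens_def)

lemma dens_meas[measurable]: "dens M Q \<in> borel_measurable M"
  unfolding dens_def by measurable

lemma dens_integral:
  assumes "prob_space M" "prob_space Q" "sets Q = sets M" "absolutely_continuous M Q"
    "h \<in> borel_measurable M"
  shows "integrable Q h \<longleftrightarrow> integrable M (\<lambda>x. dens M Q x * h x)"
    "integral\<^sup>L Q h = (\<integral>x. dens M Q x * h x \<partial>M)"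
proof -
  interpret prob_space M by fact
  have sf: "sigma_finite_measure Q" using assms(2) by (rule prob_space_imp_sigma_finite)
  show "integrable Q h \<longleftrightarrow> integrable M (\<lambda>x. dens M Q x * h x)"
    using RN_deriv_integrable[OF sf assms(4,3,5)] unfolding dens_def by simp
  show "integral\<^sup>L Q h = (\<integral>x. dens M Q x * h x \<partial>M)"
    using RN_deriv_integral[OF sf assms(4,3,5)] unfolding dens_def by simp
qed

lemma dens_nz:
  assumes "prob_space M" "prob_space Q" "sets Q = sets M" "absolutely_continuous M Q"
    "absolutely_continuous Q M"
  shows "AE x in M. dens M Q x \<noteq> 0"
proof -
  interpret Qp: prob_space Q by fact
  define A where "A = {x\<in>space M. dens M Q x = 0}"
  have A: "A \<in> sets M" unfolding A_def by measurable
  then have AQ: "A \<in> sets Q" using assms(3) by simp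
  have "integral\<^sup>L Q (indicator A) = (\<integral>x. dens M Q x * indicator A x \<partial>M)"
    by (rule dens_integral(2)[OF assms(1-4)]) (use A in measurable)
  also have "\<dots> = (\<integral>x. 0 \<partial>M)"
    by (rule Bochner_Integration.integral_cong) (auto simp: A_def split: split_indicator)
  finally have "measure Q A = 0" using AQ by simp
  then have "emeasure Q A = 0" by (simp add: Qp.emeasure_eq_measure)
  then have "A \<in> null_sets Q" using AQ by auto
  then have "A \<in> null_sets M" using assms(5) unfolding absolutely_continuous_def by auto
  from AE_space AE_not_in[OF this] show ?thesis
    by eventually_elim (auto simp: A_def)
qed



lemma int_cong_AE':
  fixes f g :: "'a \<Rightarrow> real"
  shows "AE x in M. f x = g x \<Longrightarrow> f \<in> borel_measurable M \<Longrightarrow> g \<in> borel_measurable M \<Longrightarrow>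
    integral\<^sup>L M f = integral\<^sup>L M g"
  by (rule integral_cong_AE)

lemma key:
  fixes M C :: "'a measure" and \<epsilon> Kb :: real and \<xi> :: "'a \<Rightarrow> real"
  assumes Mp: "prob_space M" and sub: "subalgebra M C" and e0: "0 < \<epsilon>" and e1: "\<epsilon> < 1"
    and equiv: "\<forall>Q\<in>rep_set M (2 + \<epsilon>) \<rho>. absolutely_continuous M Q \<and> absolutely_continuous Q M"
    and dLq: "\<forall>Q\<in>rep_set M (2 + \<epsilon>) \<rho>. dens M Q \<in> Lp_set M (1 + 2 / \<epsilon>)"
    and Kb: "\<forall>Q\<in>rep_set M (2 + \<epsilon>) \<rho>. Lp_norm M (1 + 2 / \<epsilon>) (dens M Q) \<le> Kb"
    and xi: "\<xi> \<in> Lp_set M (4 + 2 * \<epsilon>)"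
    and st: "stable M C (2 + \<epsilon>) \<rho>"
    and Q: "Q \<in> rep_set M (2 + \<epsilon>) \<rho>"
  shows "\<exists>e. e \<in> Lp_set M (2 + \<epsilon>) \<and> e \<in> borel_measurable C \<and>
     Lp_norm M (2 + \<epsilon>) e \<le> (max Kb 0 powr (1 + 2 / \<epsilon>) + (\<integral>x. \<bar>\<xi> x\<bar> powr ((2 + \<epsilon>) * (1 + \<epsilon> / 2)) \<partial>M)) powr (1 / (2 + \<epsilon>)) \<and>
     (\<forall>\<eta>. \<eta> \<in> Lp_set M (2 + \<epsilon>) \<longrightarrow> \<eta> \<in> borel_measurable C \<longrightarrow>
        (\<integral>x. (\<xi> x - e x)\<^sup>2 \<partial>Q) \<le> (\<integral>x. (\<xi> x - \<eta> x)\<^sup>2 \<partial>Q))"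
proof -
  interpret M: prob_space M by fact
  define p where "p = 2 + \<epsilon>"
  define q where "q = 1 + 2 / \<epsilon>"
  define r where "r = 1 + \<epsilon> / 2"
  have p0: "0 < p" and r0: "0 < r" and p1: "1 \<le> p"
    using e0 by (auto simp: p_def r_def)
  have "0 < 2 / \<epsilon>" using e0 by simp
  then have q0: "0 < q" unfolding q_def by linarith
  have "0 \<le> \<epsilon> * \<epsilon>" by simp
  then have ne1: "\<epsilon> \<noteq> 0" "2 + \<epsilon> \<noteq> 0" "\<epsilon> + 2 \<noteq> 0" "\<epsilon> * \<epsilon> + (4 + \<epsilon> * 4) \<noteq> 0"
    using e0 by linarith+
  have h1: "1/q = \<epsilon>/(2+\<epsilon>)" unfolding q_def using ne1 by (simp add: field_simps)
  have h2: "1/r = 2/(2+\<epsilon>)" unfolding r_def using ne1 by (simp add: field_simps)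
  have qp: "1/q + 1/p + 1/p = 1" unfolding h1 p_def using ne1 by (simp add: field_simps)
  have qr: "1/q + 1/r = 1" unfolding h1 h2 using ne1 by (simp add: field_simps)
  have "\<epsilon> * \<epsilon> \<le> 1" using e0 e1 by (intro mult_le_one) auto
  moreover have "p * r = 2 + 2 * \<epsilon> + \<epsilon> * \<epsilon> / 2" unfolding p_def r_def by (simp add: algebra_simps)
  ultimately have pr_le: "p * r \<le> 4 + 2 * \<epsilon>" by linarith
  have pr0: "0 < p * r" using p0 r0 by simp
  have fm: "finite_measure M" by (rule M.finite_measure_axioms)
  have sfs: "sigma_finite_subalgebra M C"
    by (rule finite_measure_subalgebra_is_sigma_finite)
       (simp add: finite_measure_subalgebra_def finite_measure_subalgebra_axioms_def fm sub)
  define R where "R = rep_set M (2 + \<epsilon>) \<rho>"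
  have Rfacts: "prob_space Q1 \<and> sets Q1 = sets M \<and> space Q1 = space M \<and>
      absolutely_continuous M Q1 \<and> absolutely_continuous Q1 M \<and> dens M Q1 \<in> Lp_set M q \<and>
      Lp_norm M q (dens M Q1) \<le> Kb" if "Q1 \<in> R" for Q1
  proof -
    have Q1R: "Q1 \<in> rep_set M (2 + \<epsilon>) \<rho>" using that by (simp add: R_def)
    then have s1: "sets Q1 = sets M" and "prob_space Q1" by (auto simp: rep_set_def)
    moreover have "space Q1 = space M" using sets_eq_imp_space_eq[OF s1] .
    ultimately show ?thesis using Q1R equiv dLq Kb unfolding q_def by blast
  qed
  obtain Q' where Q': "Q' \<in> R" and fQ': "AE x in M. dens M Q' x = dens M Q x / real_cond_exp M C (dens M Q) x"
    using st Q unfolding stable_def R_def by blast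
  have QR: "Q \<in> R" using Q by (simp add: R_def)
  define f where "f = dens M Q"
  define f' where "f' = dens M Q'"
  define c where "c = real_cond_exp M C f"
  note QF = Rfacts[OF QR] and Q'F = Rfacts[OF Q']
  have [measurable]: "f \<in> borel_measurable M" "f' \<in> borel_measurable M"
    unfolding f_def f'_def by measurable
  have cC[measurable]: "c \<in> borel_measurable C" unfolding c_def by (rule borel_measurable_cond_exp)
  have cM[measurable]: "c \<in> borel_measurable M" by (rule measurable_from_subalg[OF sub cC])
  have f0: "0 \<le> f x" "0 \<le> f' x" for x unfolding f_def f'_def by (simp_all add: dens_nonneg)
  have f'nz: "AE x in M. f' x \<noteq> 0"
    unfolding f'_def using Q'F by (intro dens_nz[OF Mp]) auto
  have fcf: "AE x in M. f x = c x * f' x"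
    using fQ' f'nz
  proof eventually_elim
    case (elim x)
    then have "c x \<noteq> 0" by (auto simp: f_def f'_def c_def)
    with elim show ?case by (simp add: f_def f'_def c_def field_simps)
  qed
  have cnz: "AE x in M. c x \<noteq> 0"
    using fQ' f'nz by eventually_elim (auto simp: f_def f'_def c_def)
  have fq: "f \<in> Lp_set M q" and f'q: "f' \<in> Lp_set M q"
    using QF Q'F by (auto simp: f_def f'_def)
  have xip: "\<xi> \<in> Lp_set M p" by (rule Lp_mono[OF fm xi p0]) (use e0 in \<open>simp add: p_def\<close>)
  have xir: "\<xi> \<in> Lp_set M r" by (rule Lp_mono[OF fm xi r0]) (use e0 in \<open>simp add: r_def\<close>)
  have xipr: "\<xi> \<in> Lp_set M (p * r)" by (rule Lp_mono[OF fm xi pr0 pr_le])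
  have [measurable]: "\<xi> \<in> borel_measurable M" using xi by (simp add: Lp_set_def)
  have xipL: "(\<lambda>x. \<bar>\<xi> x\<bar> powr p) \<in> Lp_set M r"
  proof -
    have "(\<lambda>x. \<bar>\<bar>\<xi> x\<bar> powr p\<bar> powr r) = (\<lambda>x. \<bar>\<xi> x\<bar> powr (p * r))"
      by (simp add: powr_powr)
    then show ?thesis using xipr by (simp add: Lp_set_def)
  qed
  have f'1: "integrable M f'"
  proof -
    have "f' \<in> Lp_set M 1" by (rule Lp_mono[OF fm f'q]) (use e0 in \<open>simp_all add: q_def\<close>)
    then have "integrable M (\<lambda>x. \<bar>f' x\<bar>)" by (simp add: Lp_set_def)
    moreover have "(\<lambda>x. \<bar>f' x\<bar>) = f'" using f0 by (simp add: abs_of_nonneg fun_eq_iff)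
    ultimately show ?thesis by simp
  qed
  have int3: "integrable M (\<lambda>x. f x * (u x * v x))" if "u \<in> Lp_set M p" "v \<in> Lp_set M p" for u v
    by (rule int3_gen[OF fq that q0 p0 p0 qp])

  have Q'p: "prob_space Q'" and sQ': "sets Q' = sets M" and spQ': "space Q' = space M"
    and acQ'1: "absolutely_continuous M Q'" and acQ'2: "absolutely_continuous Q' M"
    using Q'F by auto
  have bmQ': "borel_measurable Q' = borel_measurable M" by (rule measurable_cong_sets) (simp_all add: sQ')
  have subQ': "subalgebra Q' C" using sub sQ' spQ' by (simp add: subalgebra_def)
  have sfsQ': "sigma_finite_subalgebra Q' C"
    by (rule finite_measure_subalgebra_is_sigma_finite)
       (simp add: finite_measure_subalgebra_def finite_measure_subalgebra_axioms_def subQ'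
          prob_space.finite_measure[OF Q'p] prob_space_def)
  have intQ': "integrable Q' h \<longleftrightarrow> integrable M (\<lambda>x. f' x * h x)"
    and integQ': "integral\<^sup>L Q' h = (\<integral>x. f' x * h x \<partial>M)"
    if "h \<in> borel_measurable M" for h
    using dens_integral[OF Mp Q'p sQ' acQ'1 that] by (simp_all add: f'_def)
  have Qp: "prob_space Q" and sQ: "sets Q = sets M"
    and acQ1: "absolutely_continuous M Q"
    using QF by auto
  have integQ: "integral\<^sup>L Q h = (\<integral>x. f x * h x \<partial>M)"
    if "h \<in> borel_measurable M" for h
    using dens_integral[OF Mp Qp sQ acQ1 that] by (simp_all add: f_def)

  define eta where "eta = real_cond_exp Q' C \<xi>"
  have etaC[measurable]: "eta \<in> borel_measurable C" unfolding eta_def by (rule borel_measurable_cond_exp)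
  have etaM[measurable]: "eta \<in> borel_measurable M" by (rule measurable_from_subalg[OF sub etaC])
  have ixiQ': "integrable Q' \<xi>"
    using intQ'[of \<xi>] int2_gen[OF f'q xir q0 r0 qr] by simp
  have ixipQ': "integrable Q' (\<lambda>x. \<bar>\<xi> x\<bar> powr p)"
    using intQ'[of "\<lambda>x. \<bar>\<xi> x\<bar> powr p"] int2_gen[OF f'q xipL q0 r0 qr] by simp
  define H where "H = real_cond_exp Q' C (\<lambda>x. \<bar>\<xi> x\<bar> powr p)"
  have HC[measurable]: "H \<in> borel_measurable C" unfolding H_def by (rule borel_measurable_cond_exp)
  have HM[measurable]: "H \<in> borel_measurable M" by (rule measurable_from_subalg[OF sub HC])
  have JQ': "AE x in Q'. \<bar>eta x\<bar> powr p \<le> H x"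
    unfolding eta_def H_def
    by (rule sigma_finite_subalgebra.real_cond_exp_jensens_inequality(2)[OF sfsQ',
          where X=\<xi> and I=UNIV and q="\<lambda>t. \<bar>t\<bar> powr p"])
       (use ixiQ' ixipQ' convex_abs_powr[OF p1] in auto)
  have H0Q': "AE x in Q'. 0 \<le> H x"
    unfolding H_def
    by (rule sigma_finite_subalgebra.real_cond_exp_pos[OF sfsQ']) (auto simp: bmQ')
  have JM: "AE x in M. \<bar>eta x\<bar> powr p \<le> H x"
    by (rule absolutely_continuous_AE[OF sQ'[symmetric] acQ'2 JQ'])
  have H0M: "AE x in M. 0 \<le> H x"
    by (rule absolutely_continuous_AE[OF sQ'[symmetric] acQ'2 H0Q'])

  have nnce: "AE x in M. 1 = nn_cond_exp M C (\<lambda>x. ennreal (f' x)) x"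
  proof (rule sigma_finite_subalgebra.nn_cond_exp_charact[OF sfs])
    fix A assume AC: "A \<in> sets C"
    then have AM[measurable]: "A \<in> sets M" using sub by (auto simp: subalgebra_def)
    have ia: "integrable M (\<lambda>x. indicator A x * f' x)"
      using integrable_mult_indicator[OF AM f'1] by simp
    have ib: "integrable M (\<lambda>x. (indicator A x / c x) * f x)"
    proof (rule integrable_cong_AE[THEN iffD2, OF _ _ _ ia])
      show "AE x in M. indicator A x / c x * f x = indicator A x * f' x"
        using fcf cnz by eventually_elim (simp add: field_simps)
    qed measurable
    have mC: "(\<lambda>x. indicator A x / c x) \<in> borel_measurable C" using AC by measurable
    have fM: "f \<in> borel_measurable M" by measurable
    have "(\<integral>x. (indicator A x / c x) * c x \<partial>M) = (\<integral>x. (indicator A x / c x) * f x \<partial>M)"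
      using sigma_finite_subalgebra.real_cond_exp_intg(2)[OF sfs ib[unfolded c_def] mC[unfolded c_def] fM]
      unfolding c_def by simp
    also have "\<dots> = (\<integral>x. indicator A x * f' x \<partial>M)"
    proof (rule int_cong_AE')
      show "AE x in M. indicator A x / c x * f x = indicator A x * f' x"
        using fcf cnz by eventually_elim (simp add: field_simps)
    qed measurable
    finally have e1: "(\<integral>x. indicator A x * f' x \<partial>M) = (\<integral>x. (indicator A x / c x) * c x \<partial>M)" ..
    also have "\<dots> = (\<integral>x. indicator A x \<partial>M)"
    proof (rule int_cong_AE')
      show "AE x in M. indicator A x / c x * c x = indicator A x"
        using cnz by eventually_elim simp
    qed measurable
    also have "\<dots> = measure M A" by simp
    finally have e2: "(\<integral>x. indicator A x * f' x \<partial>M) = measure M A" .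
    have "(\<integral>\<^sup>+ x \<in> A. ennreal (f' x) \<partial>M) = (\<integral>\<^sup>+ x. ennreal (indicator A x * f' x) \<partial>M)"
      by (rule nn_integral_cong) (auto split: split_indicator)
    also have "\<dots> = ennreal (\<integral>x. indicator A x * f' x \<partial>M)"
      by (rule nn_integral_eq_integral[OF ia]) (auto simp: f0)
    also have "\<dots> = emeasure M A" using e2 by (simp add: M.emeasure_eq_measure)
    also have "\<dots> = (\<integral>\<^sup>+ x \<in> A. 1 \<partial>M)" by simp
    finally show "(\<integral>\<^sup>+ x \<in> A. ennreal (f' x) \<partial>M) = (\<integral>\<^sup>+ x \<in> A. 1 \<partial>M)" .
  qed measurable

  have xiM: "\<xi> \<in> borel_measurable M" by measurable
  define Kb' where "Kb' = max Kb 0"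
  define B where "B = Kb' powr q + (\<integral>x. \<bar>\<xi> x\<bar> powr (p * r) \<partial>M)"
  have intf'q: "(\<integral>x. \<bar>f' x\<bar> powr q \<partial>M) \<le> Kb' powr q"
  proof -
    define I where "I = (\<integral>x. \<bar>f' x\<bar> powr q \<partial>M)"
    have I0: "0 \<le> I" unfolding I_def by (intro integral_nonneg_AE) simp
    have "I powr (1/q) \<le> Kb" using Q'F unfolding I_def Lp_norm_def f'_def by simp
    then have "I powr (1/q) \<le> Kb'" unfolding Kb'_def by simp
    then have "(I powr (1/q)) powr q \<le> Kb' powr q" by (intro powr_mono2) (use q0 in auto)
    moreover have "(I powr (1/q)) powr q = I" using q0 I0 by (simp add: powr_powr)
    ultimately show ?thesis unfolding I_def by simp
  qed
  have B0: "0 \<le> B" unfolding B_def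
    by (intro add_nonneg_nonneg integral_nonneg_AE) simp_all
  have iA: "integrable M (\<lambda>x. f' x * \<bar>\<xi> x\<bar> powr p)" by (rule int2_gen[OF f'q xipL q0 r0 qr])
  have iB1: "integrable M (\<lambda>x. \<bar>f' x\<bar> powr q)" using f'q by (simp add: Lp_set_def)
  have iB2: "integrable M (\<lambda>x. \<bar>\<xi> x\<bar> powr (p * r))" using xipr by (simp add: Lp_set_def)
  have boundB: "(\<integral>x. f' x * \<bar>\<xi> x\<bar> powr p \<partial>M) \<le> B"
  proof -
    have "(\<integral>x. f' x * \<bar>\<xi> x\<bar> powr p \<partial>M) \<le> (\<integral>x. \<bar>f' x\<bar> powr q + \<bar>\<xi> x\<bar> powr (p * r) \<partial>M)"
    proof (rule Bochner_Integration.integral_mono[OF iA Bochner_Integration.integrable_add[OF iB1 iB2]])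
      fix x
      have "\<bar>f' x\<bar> * \<bar>\<xi> x\<bar> powr p \<le> \<bar>f' x\<bar> powr q + (\<bar>\<xi> x\<bar> powr p) powr r"
        by (rule pw2) (use q0 r0 qr in auto)
      then show "f' x * \<bar>\<xi> x\<bar> powr p \<le> \<bar>f' x\<bar> powr q + \<bar>\<xi> x\<bar> powr (p * r)"
        using f0[of x] by (simp add: powr_powr)
    qed
    also have "\<dots> = (\<integral>x. \<bar>f' x\<bar> powr q \<partial>M) + (\<integral>x. \<bar>\<xi> x\<bar> powr (p * r) \<partial>M)"
      by (rule Bochner_Integration.integral_add[OF iB1 iB2])
    also have "\<dots> \<le> B" unfolding B_def using intf'q by simp
    finally show ?thesis .
  qed
  have RNe: "AE x in M. RN_deriv M Q' x = ennreal (f' x)"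
  proof -
    have sfQ': "sigma_finite_measure Q'" by (rule prob_space_imp_sigma_finite[OF Q'p])
    from M.RN_deriv_finite[OF sfQ' acQ'1 sQ'] show ?thesis
      by eventually_elim (auto simp: f'_def dens_def less_top ennreal_enn2real)
  qed
  have iHQ': "integrable Q' H"
    unfolding H_def by (rule sigma_finite_subalgebra.real_cond_exp_int(1)[OF sfsQ' ixipQ'])
  have nnH: "(\<integral>\<^sup>+x. ennreal (H x) \<partial>M) = ennreal (\<integral>x. f' x * \<bar>\<xi> x\<bar> powr p \<partial>M)"
  proof -
    have "(\<integral>\<^sup>+x. ennreal (H x) \<partial>M) = (\<integral>\<^sup>+x. ennreal (H x) * nn_cond_exp M C (\<lambda>x. ennreal (f' x)) x \<partial>M)"
    proof (rule nn_integral_cong_AE)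
      show "AE x in M. ennreal (H x) = ennreal (H x) * nn_cond_exp M C (\<lambda>x. ennreal (f' x)) x"
        using nnce by eventually_elim simp
    qed
    also have "\<dots> = (\<integral>\<^sup>+x. ennreal (H x) * ennreal (f' x) \<partial>M)"
      by (rule sigma_finite_subalgebra.nn_cond_exp_intg[OF sfs]) measurable
    also have "\<dots> = (\<integral>\<^sup>+x. RN_deriv M Q' x * ennreal (H x) \<partial>M)"
    proof (rule nn_integral_cong_AE)
      show "AE x in M. ennreal (H x) * ennreal (f' x) = RN_deriv M Q' x * ennreal (H x)"
        using RNe by eventually_elim (simp add: mult.commute)
    qed
    also have "\<dots> = (\<integral>\<^sup>+x. ennreal (H x) \<partial>Q')"
      by (rule M.RN_deriv_nn_integral[symmetric, OF acQ'1 sQ']) measurable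
    also have "\<dots> = ennreal (\<integral>x. H x \<partial>Q')"
      by (rule nn_integral_eq_integral[OF iHQ' H0Q'])
    also have "ennreal (\<integral>x. H x \<partial>Q') = ennreal (\<integral>x. \<bar>\<xi> x\<bar> powr p \<partial>Q')"
      unfolding H_def using sigma_finite_subalgebra.real_cond_exp_int(2)[OF sfsQ' ixipQ'] by simp
    also have "(\<integral>x. \<bar>\<xi> x\<bar> powr p \<partial>Q') = (\<integral>x. f' x * \<bar>\<xi> x\<bar> powr p \<partial>M)"
      by (rule integQ') measurable
    finally show ?thesis .
  qed
  have nn_eta: "(\<integral>\<^sup>+x. ennreal (\<bar>eta x\<bar> powr p) \<partial>M) \<le> ennreal B"
  proof -
    have "(\<integral>\<^sup>+x. ennreal (\<bar>eta x\<bar> powr p) \<partial>M) \<le> (\<integral>\<^sup>+x. ennreal (H x) \<partial>M)"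
    proof (rule nn_integral_mono_AE)
      show "AE x in M. ennreal (\<bar>eta x\<bar> powr p) \<le> ennreal (H x)"
        using JM by eventually_elim (simp add: ennreal_leI)
    qed
    also have "\<dots> = ennreal (\<integral>x. f' x * \<bar>\<xi> x\<bar> powr p \<partial>M)" by (rule nnH)
    also have "\<dots> \<le> ennreal B" using boundB by (simp add: ennreal_leI)
    finally show ?thesis .
  qed
  have ieta: "integrable M (\<lambda>x. \<bar>eta x\<bar> powr p)"
  proof (rule integrableI_nonneg)
    show "(\<lambda>x. \<bar>eta x\<bar> powr p) \<in> borel_measurable M" by measurable
    show "AE x in M. 0 \<le> \<bar>eta x\<bar> powr p" by simp
    show "(\<integral>\<^sup>+x. ennreal (\<bar>eta x\<bar> powr p) \<partial>M) < \<infinity>"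
      using nn_eta ennreal_less_top[of B] by (metis infinity_ennreal_def le_less_trans)
  qed
  have etap: "eta \<in> Lp_set M p" using ieta etaM by (simp add: Lp_set_def)
  have int_eta_le: "(\<integral>x. \<bar>eta x\<bar> powr p \<partial>M) \<le> B"
  proof -
    have "ennreal (\<integral>x. \<bar>eta x\<bar> powr p \<partial>M) = (\<integral>\<^sup>+x. ennreal (\<bar>eta x\<bar> powr p) \<partial>M)"
      by (rule nn_integral_eq_integral[symmetric, OF ieta]) simp
    with nn_eta have "ennreal (\<integral>x. \<bar>eta x\<bar> powr p \<partial>M) \<le> ennreal B" by simp
    then show ?thesis using B0 by (simp add: ennreal_le_iff)
  qed
  have normle: "Lp_norm M p eta \<le> B powr (1 / p)"
    unfolding Lp_norm_def
    by (rule powr_mono2) (use p0 int_eta_le in \<open>auto intro: integral_nonneg_AE\<close>)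

  have ortho: "(\<integral>x. (\<xi> x - eta x)\<^sup>2 \<partial>Q) \<le> (\<integral>x. (\<xi> x - \<eta> x)\<^sup>2 \<partial>Q)"
    if \<eta>p: "\<eta> \<in> Lp_set M p" and \<eta>C: "\<eta> \<in> borel_measurable C" for \<eta>
  proof -
    have \<eta>M[measurable]: "\<eta> \<in> borel_measurable M" by (rule measurable_from_subalg[OF sub \<eta>C])
    have \<eta>C'[measurable]: "\<eta> \<in> borel_measurable C" by (rule \<eta>C)
    define g where "g = (\<lambda>x. eta x - \<eta> x)"
    have gC[measurable]: "g \<in> borel_measurable C" unfolding g_def by measurable
    have gM[measurable]: "g \<in> borel_measurable M" unfolding g_def by measurable
    have gp: "g \<in> Lp_set M p" unfolding g_def by (rule Lp_diff[OF etap \<eta>p p0])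
    have up: "(\<lambda>x. \<xi> x - eta x) \<in> Lp_set M p" by (rule Lp_diff[OF xip etap p0])
    have vp: "(\<lambda>x. \<xi> x - \<eta> x) \<in> Lp_set M p" by (rule Lp_diff[OF xip \<eta>p p0])
    have i1: "integrable M (\<lambda>x. f x * (\<xi> x * g x))" by (rule int3[OF xip gp])
    have i2: "integrable M (\<lambda>x. f x * (eta x * g x))" by (rule int3[OF etap gp])
    have iuu: "integrable M (\<lambda>x. f x * ((\<xi> x - eta x) * (\<xi> x - eta x)))" by (rule int3[OF up up])
    have iug: "integrable M (\<lambda>x. f x * ((\<xi> x - eta x) * g x))" by (rule int3[OF up gp])
    have ivv: "integrable M (\<lambda>x. f x * ((\<xi> x - \<eta> x) * (\<xi> x - \<eta> x)))" by (rule int3[OF vp vp])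
    have cgC: "(\<lambda>x. c x * g x) \<in> borel_measurable C" by measurable
    have hm: "(\<lambda>x. (c x * g x) * \<xi> x) \<in> borel_measurable M" by measurable
    have iQ'1: "integrable Q' (\<lambda>x. (c x * g x) * \<xi> x)"
    proof -
      have "integrable M (\<lambda>x. f' x * ((c x * g x) * \<xi> x))"
      proof (rule integrable_cong_AE[THEN iffD2, OF _ _ _ i1])
        show "AE x in M. f' x * ((c x * g x) * \<xi> x) = f x * (\<xi> x * g x)"
          using fcf by eventually_elim (simp add: mult_ac)
      qed measurable
      then show ?thesis using intQ'[OF hm] by simp
    qed
    have "(\<integral>x. f x * (\<xi> x * g x) \<partial>M) = (\<integral>x. f' x * ((c x * g x) * \<xi> x) \<partial>M)"
    proof (rule int_cong_AE')
      show "AE x in M. f x * (\<xi> x * g x) = f' x * ((c x * g x) * \<xi> x)"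
        using fcf by eventually_elim (simp add: mult_ac)
    qed measurable
    also have "\<dots> = (\<integral>x. (c x * g x) * \<xi> x \<partial>Q')" by (rule integQ'[OF hm, symmetric])
    also have "\<dots> = (\<integral>x. (c x * g x) * eta x \<partial>Q')"
      unfolding eta_def
      by (rule sigma_finite_subalgebra.real_cond_exp_intg(2)[OF sfsQ' iQ'1 cgC, symmetric])
         (simp add: bmQ' xiM)
    also have "\<dots> = (\<integral>x. f' x * ((c x * g x) * eta x) \<partial>M)" by (rule integQ') measurable
    also have "\<dots> = (\<integral>x. f x * (eta x * g x) \<partial>M)"
    proof (rule int_cong_AE')
      show "AE x in M. f' x * ((c x * g x) * eta x) = f x * (eta x * g x)"
        using fcf by eventually_elim (simp add: mult_ac)
    qed measurable
    finally have orth0: "(\<integral>x. f x * (\<xi> x * g x) \<partial>M) = (\<integral>x. f x * (eta x * g x) \<partial>M)" .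
    have z: "(\<integral>x. f x * ((\<xi> x - eta x) * g x) \<partial>M) = 0"
    proof -
      have "(\<integral>x. f x * ((\<xi> x - eta x) * g x) \<partial>M) = (\<integral>x. f x * (\<xi> x * g x) - f x * (eta x * g x) \<partial>M)"
        by (simp add: algebra_simps)
      also have "\<dots> = (\<integral>x. f x * (\<xi> x * g x) \<partial>M) - (\<integral>x. f x * (eta x * g x) \<partial>M)"
        by (rule Bochner_Integration.integral_diff[OF i1 i2])
      finally show ?thesis using orth0 by simp
    qed
    have iS: "integrable M (\<lambda>x. f x * ((\<xi> x - eta x) * (\<xi> x - eta x)) + 2 * (f x * ((\<xi> x - eta x) * g x)))"
      by (rule Bochner_Integration.integrable_add[OF iuu]) (rule integrable_mult_right[OF iug])
    have "(\<integral>x. (\<xi> x - eta x)\<^sup>2 \<partial>Q) = (\<integral>x. f x * (\<xi> x - eta x)\<^sup>2 \<partial>M)"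
      by (rule integQ) measurable
    also have "\<dots> = (\<integral>x. f x * ((\<xi> x - eta x) * (\<xi> x - eta x)) \<partial>M)"
      by (simp add: power2_eq_square)
    also have "\<dots> = (\<integral>x. f x * ((\<xi> x - eta x) * (\<xi> x - eta x)) + 2 * (f x * ((\<xi> x - eta x) * g x)) \<partial>M)"
      using Bochner_Integration.integral_add[OF iuu integrable_mult_right[OF iug, of 2]] z by simp
    also have "\<dots> \<le> (\<integral>x. f x * ((\<xi> x - \<eta> x) * (\<xi> x - \<eta> x)) \<partial>M)"
    proof (rule Bochner_Integration.integral_mono[OF iS ivv])
      fix x
      have e: "\<xi> x - \<eta> x = (\<xi> x - eta x) + g x" by (simp add: g_def)
      have "0 \<le> f x * (g x * g x)" using f0[of x] by simp
      then show "f x * ((\<xi> x - eta x) * (\<xi> x - eta x)) + 2 * (f x * ((\<xi> x - eta x) * g x))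
          \<le> f x * ((\<xi> x - \<eta> x) * (\<xi> x - \<eta> x))"
        unfolding e by (simp add: algebra_simps)
    qed
    also have "\<dots> = (\<integral>x. f x * (\<xi> x - \<eta> x)\<^sup>2 \<partial>M)"
      by (simp add: power2_eq_square)
    also have "\<dots> = (\<integral>x. (\<xi> x - \<eta> x)\<^sup>2 \<partial>Q)"
      by (rule integQ[symmetric]) measurable
    finally show ?thesis .
  qed
  show ?thesis
  proof (intro exI[of _ eta] conjI allI impI)
    show "eta \<in> Lp_set M (2 + \<epsilon>)" using etap by (simp add: p_def)
    show "eta \<in> borel_measurable C" by (rule etaC)
    show "Lp_norm M (2 + \<epsilon>) eta \<le> (max Kb 0 powr (1 + 2 / \<epsilon>) + (\<integral>x. \<bar>\<xi> x\<bar> powr ((2 + \<epsilon>) * (1 + \<epsilon> / 2)) \<partial>M)) powr (1 / (2 + \<epsilon>))"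
      using normle by (simp add: p_def q_def r_def B_def Kb'_def)
    fix \<eta> assume "\<eta> \<in> Lp_set M (2 + \<epsilon>)" "\<eta> \<in> borel_measurable C"
    then show "(\<integral>x. (\<xi> x - eta x)\<^sup>2 \<partial>Q) \<le> (\<integral>x. (\<xi> x - \<eta> x)\<^sup>2 \<partial>Q)"
      using ortho by (simp add: p_def)
  qed
qed

theorem proposition2:
  fixes M :: "'a measure" and C :: "'a measure" and \<epsilon> :: real
    and \<rho> :: "('a \<Rightarrow> real) \<Rightarrow> real" and \<xi> :: "'a \<Rightarrow> real"
  assumes "prob_space M" and "complete_measure M"
    and "0 < \<epsilon>" and "\<epsilon> < 1"
    and "subalgebra M C"
    and "sublinear_operator M (2 + \<epsilon>) \<rho>"
    and equiv: "\<forall>Q\<in>rep_set M (2 + \<epsilon>) \<rho>. absolutely_continuous M Q \<and> absolutely_continuous Q M"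
    and dens_in_Lq: "\<forall>Q\<in>rep_set M (2 + \<epsilon>) \<rho>. dens M Q \<in> Lp_set M (1 + 2 / \<epsilon>)"
    and bounded: "\<exists>K. \<forall>Q\<in>rep_set M (2 + \<epsilon>) \<rho>. Lp_norm M (1 + 2 / \<epsilon>) (dens M Q) \<le> K"
    and compact: "compactin (weak_Lp_topology M (1 + 2 / \<epsilon>) (1 + \<epsilon> / 2))
                    (dens M ` rep_set M (2 + \<epsilon>) \<rho>)"
    and "\<xi> \<in> Lp_set M (4 + 2 * \<epsilon>)"
    and "stable M C (2 + \<epsilon>) \<rho>"
  shows "\<exists>K::real. \<forall>Q\<in>rep_set M (2 + \<epsilon>) \<rho>.
    (INF \<eta>\<in>{\<eta>\<in>Lp_set M (2 + \<epsilon>). \<eta> \<in> borel_measurable C}. \<integral>x. (\<xi> x - \<eta> x)\<^sup>2 \<partial>Q) =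
    (INF \<eta>\<in>{\<eta>\<in>Lp_set M (2 + \<epsilon>). \<eta> \<in> borel_measurable C \<and> Lp_norm M (2 + \<epsilon>) \<eta> \<le> K}.
       \<integral>x. (\<xi> x - \<eta> x)\<^sup>2 \<partial>Q)"
  proof -
  obtain Kb where Kb: "\<forall>Q\<in>rep_set M (2 + \<epsilon>) \<rho>. Lp_norm M (1 + 2 / \<epsilon>) (dens M Q) \<le> Kb"
    using bounded by blast
  define K where "K = (max Kb 0 powr (1 + 2 / \<epsilon>) + (\<integral>x. \<bar>\<xi> x\<bar> powr ((2 + \<epsilon>) * (1 + \<epsilon> / 2)) \<partial>M)) powr (1 / (2 + \<epsilon>))"
  show ?thesis
  proof (intro exI[of _ K] ballI)
    fix Q assume Q: "Q \<in> rep_set M (2 + \<epsilon>) \<rho>"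
    obtain e where e: "e \<in> Lp_set M (2 + \<epsilon>)" "e \<in> borel_measurable C" "Lp_norm M (2 + \<epsilon>) e \<le> K"
      and emin: "\<forall>\<eta>. \<eta> \<in> Lp_set M (2 + \<epsilon>) \<longrightarrow> \<eta> \<in> borel_measurable C \<longrightarrow>
          (\<integral>x. (\<xi> x - e x)\<^sup>2 \<partial>Q) \<le> (\<integral>x. (\<xi> x - \<eta> x)\<^sup>2 \<partial>Q)"
      using key[OF assms(1) assms(5) assms(3) assms(4) equiv dens_in_Lq Kb assms(11) assms(12) Q]
      unfolding K_def by blast
    have "(INF \<eta>\<in>{\<eta>\<in>Lp_set M (2 + \<epsilon>). \<eta> \<in> borel_measurable C}. \<integral>x. (\<xi> x - \<eta> x)\<^sup>2 \<partial>Q)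
        = (\<integral>x. (\<xi> x - e x)\<^sup>2 \<partial>Q)"
      by (rule cInf_eq_minimum) (use e emin in auto)
    moreover have "(INF \<eta>\<in>{\<eta>\<in>Lp_set M (2 + \<epsilon>). \<eta> \<in> borel_measurable C \<and> Lp_norm M (2 + \<epsilon>) \<eta> \<le> K}.
       \<integral>x. (\<xi> x - \<eta> x)\<^sup>2 \<partial>Q) = (\<integral>x. (\<xi> x - e x)\<^sup>2 \<partial>Q)"
      by (rule cInf_eq_minimum) (use e emin in auto)
    ultimately show "(INF \<eta>\<in>{\<eta>\<in>Lp_set M (2 + \<epsilon>). \<eta> \<in> borel_measurable C}. \<integral>x. (\<xi> x - \<eta> x)\<^sup>2 \<partial>Q) =
      (INF \<eta>\<in>{\<eta>\<in>Lp_set M (2 + \<epsilon>). \<eta> \<in> borel_measurable C \<and> Lp_norm M (2 + \<epsilon>) \<eta> \<le> K}.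
         \<integral>x. (\<xi> x - \<eta> x)\<^sup>2 \<partial>Q)" by simp
  qed
qed

end
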